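(* Let $\alpha\in\mathbb R$ and let $(x(s),z(s),\psi(s))$ be a solution of the system $$x'=\cos\psi,\quad z'=\sin\psi,\quad \psi'=\alpha\,\frac{z\cos\psi-x\sin\psi}{x^2+z^2}-\frac{\sin\psi}{x},$$ with initial conditions $(x(0),z(0))=(1,0)$, $\psi(0)=\pi/2$. Then the curve $\gamma(s)=(x(s),0,z(s))$ is symmetric about the $x$-axis.
   Context: The system describes the arc-length parametrized generating curve $\gamma$ of a surface of revolution about the $z$-axis satisfying $H=\alpha\langle\nu,p\rangle/|p|^2$ ($H$ the sum of the principal curvatures); the initial conditions mean $\gamma$ meets the $x$-axis orthogonally at $(1,0,0)$. *)

theory Defs
  imports "HOL-Analysis.Analysis"
begin

end

theory Submission
  imports Defs
begin

lemma cos_lip: "\<bar>cos (a::real) - cos b\<bar> \<le> \<bar>a - b\<bar>"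
proof -
  have "\<bar>cos a - cos b\<bar> = 2 * \<bar>sin ((a + b) / 2)\<bar> * \<bar>sin ((b - a) / 2)\<bar>"
    by (simp add: cos_diff_cos abs_mult)
  also have "\<dots> \<le> 2 * 1 * \<bar>(b - a) / 2\<bar>"
    by (intro mult_mono abs_sin_x_le_abs_x) auto
  finally show ?thesis by simp
qed
lemma sin_lip: "\<bar>sin (a::real) - sin b\<bar> \<le> \<bar>a - b\<bar>"
proof -
  have "\<bar>sin a - sin b\<bar> = 2 * \<bar>sin ((a - b) / 2)\<bar> * \<bar>cos ((a + b) / 2)\<bar>"
    by (simp add: sin_diff_sin abs_mult)
  also have "\<dots> \<le> 2 * \<bar>(a - b) / 2\<bar> * 1"
    by (intro mult_mono abs_sin_x_le_abs_x) auto
  finally show ?thesis by simp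
qed
lemma quot_lip:
  fixes p1 p2 r1 r2 m B :: real
  assumes "m > 0" "r1 \<ge> m" "r2 \<ge> m" "\<bar>p2\<bar> \<le> B"
  shows "\<bar>p1/r1 - p2/r2\<bar> \<le> \<bar>p1-p2\<bar>/m + B*\<bar>r1-r2\<bar>/m^2"
proof -
  have e: "p1/r1 - p2/r2 = (p1-p2)/r1 + p2*(r2-r1)/(r1*r2)"
    using assms by (simp add: field_simps)
  have a: "\<bar>(p1-p2)/r1\<bar> \<le> \<bar>p1-p2\<bar>/m"
    using assms by (simp add: abs_div frac_le)
  have "\<bar>p2*(r2-r1)/(r1*r2)\<bar> = \<bar>p2\<bar>*\<bar>r1-r2\<bar>/(r1*r2)"
    using assms by (simp add: abs_mult abs_minus_commute)
  also have "\<dots> \<le> B*\<bar>r1-r2\<bar>/(m*m)"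
    using assms by (intro frac_le mult_mono mult_pos_pos) auto
  finally have b: "\<bar>p2*(r2-r1)/(r1*r2)\<bar> \<le> B*\<bar>r1-r2\<bar>/m^2" by (simp add: power2_eq_square)
  show ?thesis unfolding e using a b abs_triangle_ineq[of "(p1-p2)/r1" "p2*(r2-r1)/(r1*r2)"] by linarith
qed

definition Gf :: "real \<Rightarrow> real \<Rightarrow> real \<Rightarrow> real \<Rightarrow> real" where
  "Gf al X Z P = al * (Z * cos P - X * sin P) / (X\<^sup>2 + Z\<^sup>2) - sin P / X"

lemma G_lip:
  fixes al d M X1 X2 Z1 Z2 P1 P2 :: real
  assumes d: "d > 0" "d \<le> X1" "d \<le> X2" and M: "\<bar>X1\<bar> \<le> M" "\<bar>X2\<bar> \<le> M" "\<bar>Z1\<bar> \<le> M" "\<bar>Z2\<bar> \<le> M"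
  shows "\<bar>Gf al X1 Z1 P1 - Gf al X2 Z2 P2\<bar> \<le>
    (\<bar>al\<bar> * ((1 + 2*M) / d^2 + 4*M^2 / d^4) + 1/d + 1/d^2) * (\<bar>X1-X2\<bar> + \<bar>Z1-Z2\<bar> + \<bar>P1-P2\<bar>)"
proof -
  define dX dZ dP where "dX = \<bar>X1-X2\<bar>" "dZ = \<bar>Z1-Z2\<bar>" "dP = \<bar>P1-P2\<bar>"
  define Q1 Q2 R1 R2 where "Q1 = Z1 * cos P1 - X1 * sin P1" "Q2 = Z2 * cos P2 - X2 * sin P2"
    "R1 = X1\<^sup>2 + Z1\<^sup>2" "R2 = X2\<^sup>2 + Z2\<^sup>2"
  have M0: "M \<ge> 0" using M by linarith
  have h1: "\<bar>Q1 - Q2\<bar> \<le> dX + dZ + 2*M*dP"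
  proof -
    have e: "Q1 - Q2 = (Z1 - Z2) * cos P1 + Z2 * (cos P1 - cos P2) - (X1 - X2) * sin P1 - X2 * (sin P1 - sin P2)"
      unfolding Q1_Q2_R1_R2_def by (simp add: algebra_simps)
    have a: "\<bar>(Z1-Z2)*cos P1\<bar> \<le> dZ" unfolding dX_dZ_dP_def abs_mult
      by (simp add: mult_left_le)
    have b: "\<bar>(X1 - X2) * sin P1\<bar> \<le> dX" unfolding dX_dZ_dP_def abs_mult
      by (simp add: mult_left_le)
    have c: "\<bar>Z2*(cos P1 - cos P2)\<bar> \<le> M * dP" unfolding dX_dZ_dP_def abs_mult
      using M cos_lip by (intro mult_mono) auto
    have c2: "\<bar>X2 * (sin P1 - sin P2)\<bar> \<le> M * dP" unfolding dX_dZ_dP_def abs_mult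
      using M sin_lip by (intro mult_mono) auto
    show ?thesis unfolding e using a b c c2 by linarith
  qed
  have h2: "\<bar>Q2\<bar> \<le> 2*M"
  proof -
    have "\<bar>Z2 * cos P2\<bar> \<le> M" unfolding abs_mult using M mult_left_mono[of "\<bar>cos P2\<bar>" 1 "\<bar>Z2\<bar>"] by simp
    moreover have "\<bar>X2 * sin P2\<bar> \<le> M" unfolding abs_mult using M mult_left_mono[of "\<bar>sin P2\<bar>" 1 "\<bar>X2\<bar>"] by simp
    ultimately show ?thesis unfolding Q1_Q2_R1_R2_def by linarith
  qed
  have h3: "\<bar>R1 - R2\<bar> \<le> 2*M*(dX + dZ)"
  proof -
    have e: "R1 - R2 = (X1-X2)*(X1+X2) + (Z1-Z2)*(Z1+Z2)"
      unfolding Q1_Q2_R1_R2_def by (simp add: algebra_simps power2_eq_square)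
    have a: "\<bar>(X1-X2)*(X1+X2)\<bar> \<le> dX * (2*M)" unfolding dX_dZ_dP_def abs_mult
      using M by (intro mult_left_mono) auto
    have b: "\<bar>(Z1-Z2)*(Z1+Z2)\<bar> \<le> dZ * (2*M)" unfolding dX_dZ_dP_def abs_mult
      using M by (intro mult_left_mono) auto
    show ?thesis unfolding e using a b by (simp add: algebra_simps)
  qed
  have sq: "d^2 \<le> X^2" if "d \<le> X" for X using d that by (intro power_mono) auto
  have h4: "R1 \<ge> d^2" "R2 \<ge> d^2" unfolding Q1_Q2_R1_R2_def using sq d
    by (auto intro: add_increasing2)
  have A: "\<bar>Q1/R1 - Q2/R2\<bar> \<le> \<bar>Q1-Q2\<bar>/d^2 + (2*M)*\<bar>R1-R2\<bar>/(d^2)^2"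
    using quot_lip[OF _ h4 h2] d by simp
  have S: "\<bar>sin P1/X1 - sin P2/X2\<bar> \<le> \<bar>sin P1 - sin P2\<bar>/d + 1*\<bar>X1-X2\<bar>/d^2"
    using quot_lip[of d X1 X2 "sin P2" 1 "sin P1"] d by simp
  define e1 e2 e3 where "e1 = 1/d^2" "e2 = 1/d^4" "e3 = 1/d"
  have e0: "e1 \<ge> 0" "e2 \<ge> 0" "e3 \<ge> 0" unfolding e1_e2_e3_def using d by auto
  have A2: "\<bar>Q1/R1 - Q2/R2\<bar> \<le> (dX + dZ + 2*M*dP)*e1 + 4*M^2*(dX+dZ)*e2"
  proof -
    have "\<bar>Q1-Q2\<bar>/d^2 \<le> (dX + dZ + 2*M*dP)*e1" unfolding e1_e2_e3_def
      using h1 d by (simp add: divide_right_mono)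
    moreover have "(2*M)*\<bar>R1-R2\<bar>/(d^2)^2 \<le> 4*M^2*(dX+dZ)*e2" 
    proof -
      have "(2*M)*\<bar>R1-R2\<bar> \<le> (2*M)*(2*M*(dX + dZ))" using h3 M0 by (intro mult_left_mono) auto
      then have "(2*M)*\<bar>R1-R2\<bar>/(d^2)^2 \<le> (2*M)*(2*M*(dX + dZ))/(d^2)^2"
        by (simp add: divide_right_mono)
      moreover have "(2*M)*(2*M*(dX + dZ))/(d^2)^2 = 4*M^2*(dX+dZ)*e2"
        unfolding e1_e2_e3_def by (simp add: power2_eq_square power4_eq_xxxx)
      ultimately show ?thesis by linarith
    qed
    ultimately show ?thesis using A by linarith
  qed
  have S2: "\<bar>sin P1/X1 - sin P2/X2\<bar> \<le> dP*e3 + dX*e1"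
  proof -
    have "\<bar>sin P1 - sin P2\<bar>/d \<le> dP*e3" unfolding e1_e2_e3_def dX_dZ_dP_def
      using sin_lip d by (simp add: divide_right_mono)
    moreover have "1*\<bar>X1-X2\<bar>/d^2 = dX*e1" unfolding e1_e2_e3_def dX_dZ_dP_def by simp
    ultimately show ?thesis using S by linarith
  qed
  have G: "Gf al X1 Z1 P1 - Gf al X2 Z2 P2 = al*(Q1/R1 - Q2/R2) - (sin P1/X1 - sin P2/X2)"
    unfolding Gf_def Q1_Q2_R1_R2_def by (simp add: algebra_simps)
  have "\<bar>Gf al X1 Z1 P1 - Gf al X2 Z2 P2\<bar> \<le> \<bar>al\<bar> * \<bar>Q1/R1 - Q2/R2\<bar> + \<bar>sin P1/X1 - sin P2/X2\<bar>"
    unfolding G by (metis abs_mult abs_triangle_ineq4)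
  also have "\<dots> \<le> \<bar>al\<bar> * ((dX + dZ + 2*M*dP)*e1 + 4*M^2*(dX+dZ)*e2) + (dP*e3 + dX*e1)"
    using A2 S2 by (intro add_mono mult_left_mono) auto
  also have "\<dots> \<le> (\<bar>al\<bar> * ((1 + 2*M)*e1 + 4*M^2*e2) + e3 + e1) * (dX + dZ + dP)"
  proof -
    have "(\<bar>al\<bar> * ((1 + 2*M)*e1 + 4*M^2*e2) + e3 + e1) * (dX + dZ + dP)
      - (\<bar>al\<bar> * ((dX + dZ + 2*M*dP)*e1 + 4*M^2*(dX+dZ)*e2) + (dP*e3 + dX*e1))
      = \<bar>al\<bar> * (2*M*e1*(dX+dZ) + e1*dP + 4*M^2*e2*dP) + e3*(dX+dZ) + e1*(dZ+dP)"
      by (simp add: algebra_simps)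
    moreover have "\<bar>al\<bar> * (2*M*e1*(dX+dZ) + e1*dP + 4*M^2*e2*dP) + e3*(dX+dZ) + e1*(dZ+dP) \<ge> 0"
      using e0 M0 unfolding dX_dZ_dP_def by (intro add_nonneg_nonneg mult_nonneg_nonneg) auto
    ultimately show ?thesis by linarith
  qed
  finally show ?thesis unfolding e1_e2_e3_def dX_dZ_dP_def by (simp add: divide_inverse algebra_simps)
qed

lemma uniq3:
  fixes a b c aa bb cc fa fb fc ga gb gc :: "real \<Rightarrow> real" and T L :: real
  assumes L: "L \<ge> 0"
  and da: "\<And>s. s\<in>{0..T} \<Longrightarrow> (a has_real_derivative fa s) (at s within {0..T})"
  and db: "\<And>s. s\<in>{0..T} \<Longrightarrow> (b has_real_derivative fb s) (at s within {0..T})"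
  and dc: "\<And>s. s\<in>{0..T} \<Longrightarrow> (c has_real_derivative fc s) (at s within {0..T})"
  and da2: "\<And>s. s\<in>{0..T} \<Longrightarrow> (aa has_real_derivative ga s) (at s within {0..T})"
  and db2: "\<And>s. s\<in>{0..T} \<Longrightarrow> (bb has_real_derivative gb s) (at s within {0..T})"
  and dc2: "\<And>s. s\<in>{0..T} \<Longrightarrow> (cc has_real_derivative gc s) (at s within {0..T})"
  and i: "a 0 = aa 0" "b 0 = bb 0" "c 0 = cc 0"
  and lip: "\<And>s. s\<in>{0..T} \<Longrightarrow> \<bar>fa s - ga s\<bar> + \<bar>fb s - gb s\<bar> + \<bar>fc s - gc s\<bar>
        \<le> L * (\<bar>a s - aa s\<bar> + \<bar>b s - bb s\<bar> + \<bar>c s - cc s\<bar>)"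
  and t: "t \<in> {0..T}"
  shows "a t = aa t \<and> b t = bb t \<and> c t = cc t"
proof -
  define u where "u s = (a s - aa s)^2 + (b s - bb s)^2 + (c s - cc s)^2" for s
  define du where "du s = 2*((a s - aa s)*(fa s - ga s) + (b s - bb s)*(fb s - gb s) + (c s - cc s)*(fc s - gc s))" for s
  define v where "v s = u s * exp (- (6 * L) * s)" for s
  define dv where "dv s = du s * exp (- (6 * L) * s) - 6*L* u s * exp (- (6 * L) * s)" for s
  have hu: "(u has_real_derivative du s) (at s within {0..T})" if "s \<in> {0..T}" for s
    unfolding u_def du_def
    by (rule derivative_eq_intros da db dc da2 db2 dc2 that refl | simp)+
  have hv: "(v has_real_derivative dv s) (at s within {0..T})" if "s \<in> {0..T}" for s
    unfolding v_def dv_def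
    by (rule derivative_eq_intros hu that refl | simp)+
  have dule: "du s \<le> 6*L*u s" if "s \<in> {0..T}" for s
  proof -
    define p q r where "p = a s - aa s" "q = b s - bb s" "r = c s - cc s"
    define A B C where "A = fa s - ga s" "B = fb s - gb s" "C = fc s - gc s"
    define S where "S = \<bar>p\<bar> + \<bar>q\<bar> + \<bar>r\<bar>"
    have S0: "S \<ge> 0" unfolding S_def by simp
    have l: "\<bar>A\<bar> + \<bar>B\<bar> + \<bar>C\<bar> \<le> L * S" using lip[OF that] unfolding p_q_r_def A_B_C_def S_def .
    have "du s = 2*(p*A + q*B + r*C)" unfolding du_def p_q_r_def A_B_C_def by simp
    also have "\<dots> \<le> 2*(\<bar>p\<bar>*\<bar>A\<bar> + \<bar>q\<bar>*\<bar>B\<bar> + \<bar>r\<bar>*\<bar>C\<bar>)"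
      by (simp add: abs_mult[symmetric] add_mono abs_ge_self)
    also have "\<dots> \<le> 2*(S*\<bar>A\<bar> + S*\<bar>B\<bar> + S*\<bar>C\<bar>)"
      unfolding S_def by (intro mult_left_mono add_mono mult_right_mono) auto
    also have "\<dots> = 2*S*(\<bar>A\<bar> + \<bar>B\<bar> + \<bar>C\<bar>)" by (simp add: algebra_simps)
    also have "\<dots> \<le> 2*S*(L*S)" using l S0 by (intro mult_left_mono) auto
    also have "\<dots> \<le> 6*L*u s"
    proof -
      have "3*(\<bar>p\<bar>^2+\<bar>q\<bar>^2+\<bar>r\<bar>^2) - S^2 = (\<bar>p\<bar>-\<bar>q\<bar>)^2+(\<bar>q\<bar>-\<bar>r\<bar>)^2+(\<bar>p\<bar>-\<bar>r\<bar>)^2"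
        unfolding S_def by (simp add: power2_eq_square algebra_simps)
      moreover have "(\<bar>p\<bar>-\<bar>q\<bar>)^2+(\<bar>q\<bar>-\<bar>r\<bar>)^2+(\<bar>p\<bar>-\<bar>r\<bar>)^2 \<ge> 0" by simp
      ultimately have "S^2 \<le> 3*(p^2+q^2+r^2)" by (simp only: power2_abs)
      then have "L*S^2 \<le> L*(3*(p^2+q^2+r^2))" using L by (intro mult_left_mono)
      then show ?thesis unfolding u_def p_q_r_def by (simp add: power2_eq_square algebra_simps)
    qed
    finally show ?thesis .
  qed
  have dvle: "dv s \<le> 0" if "s \<in> {0..T}" for s
  proof -
    have "du s * exp (- (6 * L) * s) \<le> 6*L* u s * exp (- (6 * L) * s)"
      using dule[OF that] by (intro mult_right_mono) auto
    then show ?thesis unfolding dv_def by linarith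
  qed
  from t have t0: "0 \<le> t" "t \<le> T" by auto
  have "(dv has_integral (v t - v 0)) {0..t}"
    apply (rule fundamental_theorem_of_calculus[OF t0(1)])
    apply (subst has_real_derivative_iff_has_vector_derivative[symmetric])
    apply (rule has_field_derivative_subset[OF hv])
    using t0 by auto
  moreover have "((\<lambda>_. 0::real) has_integral 0) {0..t}" by simp
  ultimately have "v t - v 0 \<le> 0"
    by (rule has_integral_le) (use dvle t0 in auto)
  moreover have "v 0 = 0" unfolding v_def u_def using i by simp
  ultimately have "u t * exp (- (6 * L) * t) \<le> 0" unfolding v_def by simp
  then have "u t \<le> 0" by (simp add: mult_le_0_iff)
  moreover have "(a t - aa t)^2 \<ge> 0" "(b t - bb t)^2 \<ge> 0" "(c t - cc t)^2 \<ge> 0" by simp_all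
  ultimately have "(a t - aa t)^2 = 0" "(b t - bb t)^2 = 0" "(c t - cc t)^2 = 0"
    unfolding u_def by linarith+
  then show ?thesis by simp
qed

lemma refl_deriv:
  fixes f f' :: "real \<Rightarrow> real"
  assumes "\<forall>s\<in>I. (f has_real_derivative f' s) (at s within I)" "uminus ` {0..T} \<subseteq> I" "t \<in> {0..T}"
  shows "((\<lambda>t. f (- t)) has_real_derivative - f' (- t)) (at t within {0..T})"
proof -
  have "-t \<in> I" using assms(2,3) by auto
  have "(f has_real_derivative f' (-t)) (at (uminus t) within (uminus ` {0..T}))"
    using has_field_derivative_subset[OF assms(1)[rule_format, OF \<open>-t \<in> I\<close>] assms(2)] by simp
  from DERIV_image_chain[OF this DERIV_minus[OF DERIV_ident]]
  show ?thesis by (simp add: o_def)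
qed

theorem mainTheorem14:
  fixes \<alpha> :: real and x z \<psi> :: "real \<Rightarrow> real" and I :: "real set"
  assumes I_int: "is_interval I" and I0: "0 \<in> I"
    and x_ne0: "\<forall>s\<in>I. x s \<noteq> 0"
    and dx: "\<forall>s\<in>I. (x has_real_derivative cos (\<psi> s)) (at s within I)"
    and dz: "\<forall>s\<in>I. (z has_real_derivative sin (\<psi> s)) (at s within I)"
    and dpsi: "\<forall>s\<in>I. (\<psi> has_real_derivative
                 (\<alpha> * (z s * cos (\<psi> s) - x s * sin (\<psi> s)) / ((x s)\<^sup>2 + (z s)\<^sup>2)
                  - sin (\<psi> s) / x s)) (at s within I)"
    and init: "x 0 = 1" "z 0 = 0" "\<psi> 0 = pi / 2"
  shows "\<forall>s. s \<in> I \<and> - s \<in> I \<longrightarrow> x (- s) = x s \<and> z (- s) = - z s"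
proof (intro allI impI)
  fix s assume s: "s \<in> I \<and> - s \<in> I"
  define T where "T = \<bar>s\<bar>"
  have T0: "T \<ge> 0" unfolding T_def by simp
  have sub: "{-T..T} \<subseteq> I"
  proof
    fix t assume t: "t \<in> {-T..T}"
    have "min s (-s) \<in> I" "max s (-s) \<in> I" using s by (auto simp: min_def max_def)
    moreover have "min s (-s) \<le> t" "t \<le> max s (-s)" using t unfolding T_def by auto
    ultimately show "t \<in> I" using I_int unfolding is_interval_1 by blast
  qed
  have sub0: "{0..T} \<subseteq> I" "uminus ` {0..T} \<subseteq> I" using sub by auto
  have contx: "continuous_on I x"
    using dx DERIV_continuous continuous_on_eq_continuous_within by blast
  have contz: "continuous_on I z"
    using dz DERIV_continuous continuous_on_eq_continuous_within by blast
  have xpos: "x t > 0" if "t \<in> I" for t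
  proof (rule ccontr)
    assume "\<not> x t > 0"
    then have "x t < 0" using x_ne0 that by force
    have "connected (x ` I)"
      using connected_continuous_image[OF contx] I_int is_interval_connected_1 by blast
    then have "is_interval (x ` I)" using is_interval_connected_1 by blast
    moreover have "x t \<in> x ` I" "x 0 \<in> x ` I" using that I0 by auto
    ultimately have "0 \<in> x ` I" unfolding is_interval_1 using \<open>x t < 0\<close> init(1)
      by (metis less_eq_real_def zero_less_one)
    then show False using x_ne0 by auto
  qed
  obtain m where m: "m \<in> {-T..T}" "\<forall>y\<in>{-T..T}. x m \<le> x y"
    using continuous_attains_inf[of "{-T..T}" x] continuous_on_subset[OF contx sub] T0 by auto
  define d where "d = x m"
  have d0: "d > 0" unfolding d_def using xpos m sub by auto
  have cxz: "continuous_on {-T..T} (\<lambda>t. \<bar>x t\<bar> + \<bar>z t\<bar>)"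
    using continuous_on_subset[OF contx sub] continuous_on_subset[OF contz sub]
    by (intro continuous_intros)
  obtain mm where mm: "mm \<in> {-T..T}" "\<forall>y\<in>{-T..T}. \<bar>x y\<bar> + \<bar>z y\<bar> \<le> \<bar>x mm\<bar> + \<bar>z mm\<bar>"
    using continuous_attains_sup[OF _ _ cxz] T0 by auto
  define M where "M = \<bar>x mm\<bar> + \<bar>z mm\<bar>"
  have M0: "M \<ge> 0" unfolding M_def by simp
  have bx: "\<bar>x y\<bar> \<le> M" "\<bar>z y\<bar> \<le> M" "d \<le> x y" if "y \<in> {-T..T}" for y
    using mm(2) that m(2) unfolding M_def d_def by force+
  define C where "C = \<bar>\<alpha>\<bar> * ((1 + 2*M) / d^2 + 4*M^2 / d^4) + 1/d + 1/d^2"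
  have C0: "C \<ge> 0" unfolding C_def using d0 M0 by (intro add_nonneg_nonneg mult_nonneg_nonneg) auto
  have dpsi': "\<forall>s\<in>I. (\<psi> has_real_derivative Gf \<alpha> (x s) (z s) (\<psi> s)) (at s within I)"
    using dpsi unfolding Gf_def .
  have main: "x t = x (-t) \<and> z t = - z (-t) \<and> \<psi> t = pi - \<psi> (-t)" if t: "t \<in> {0..T}" for t
  proof (rule uniq3[where L = "2 + C" and T = T and t = t and a = x and b = z and c = \<psi> and
        aa = "\<lambda>t. x (- t)" and bb = "\<lambda>t. - z (- t)" and cc = "\<lambda>t. pi - \<psi> (- t)" and
        fa = "\<lambda>t. cos (\<psi> t)" and fb = "\<lambda>t. sin (\<psi> t)" and fc = "\<lambda>t. Gf \<alpha> (x t) (z t) (\<psi> t)" and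
        ga = "\<lambda>t. cos (pi - \<psi> (-t))" and gb = "\<lambda>t. sin (pi - \<psi> (-t))" and
        gc = "\<lambda>t. Gf \<alpha> (x (-t)) (- z (-t)) (pi - \<psi> (-t))"])
    show "0 \<le> 2 + C" using C0 by simp
    show "t \<in> {0..T}" by fact
    show "(x has_real_derivative cos (\<psi> s)) (at s within {0..T})" if "s \<in> {0..T}" for s
      using has_field_derivative_subset[OF dx[rule_format] sub0(1)] that sub0 by auto
    show "(z has_real_derivative sin (\<psi> s)) (at s within {0..T})" if "s \<in> {0..T}" for s
      using has_field_derivative_subset[OF dz[rule_format] sub0(1)] that sub0 by auto
    show "(\<psi> has_real_derivative Gf \<alpha> (x s) (z s) (\<psi> s)) (at s within {0..T})" if "s \<in> {0..T}" for s
      using has_field_derivative_subset[OF dpsi'[rule_format] sub0(1)] that sub0 by auto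
    show "((\<lambda>t. x (- t)) has_real_derivative cos (pi - \<psi> (-s))) (at s within {0..T})" if "s \<in> {0..T}" for s
      using refl_deriv[OF dx sub0(2) that] by simp
    show "((\<lambda>t. - z (- t)) has_real_derivative sin (pi - \<psi> (-s))) (at s within {0..T})" if "s \<in> {0..T}" for s
      using DERIV_minus[OF refl_deriv[OF dz sub0(2) that]] by simp
    show "((\<lambda>t. pi - \<psi> (- t)) has_real_derivative Gf \<alpha> (x (-s)) (- z (-s)) (pi - \<psi> (-s))) (at s within {0..T})"
      if "s \<in> {0..T}" for s
      using DERIV_diff[OF DERIV_const refl_deriv[OF dpsi' sub0(2) that]]
      by (simp add: Gf_def algebra_simps)
    show "x 0 = x (- 0)" "z 0 = - z (- 0)" "\<psi> 0 = pi - \<psi> (- 0)" using init by simp_all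
    show "\<bar>cos (\<psi> s) - cos (pi - \<psi> (- s))\<bar> + \<bar>sin (\<psi> s) - sin (pi - \<psi> (- s))\<bar> +
          \<bar>Gf \<alpha> (x s) (z s) (\<psi> s) - Gf \<alpha> (x (- s)) (- z (- s)) (pi - \<psi> (- s))\<bar>
          \<le> (2 + C) * (\<bar>x s - x (- s)\<bar> + \<bar>z s - - z (- s)\<bar> + \<bar>\<psi> s - (pi - \<psi> (- s))\<bar>)"
      if "s \<in> {0..T}" for s
    proof -
      define S where "S = \<bar>x s - x (- s)\<bar> + \<bar>z s - - z (- s)\<bar> + \<bar>\<psi> s - (pi - \<psi> (- s))\<bar>"
      have s1: "s \<in> {-T..T}" "-s \<in> {-T..T}" using that by auto
      have "\<bar>cos (\<psi> s) - cos (pi - \<psi> (- s))\<bar> \<le> \<bar>\<psi> s - (pi - \<psi> (- s))\<bar>" by (rule cos_lip)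
      moreover have "\<bar>sin (\<psi> s) - sin (pi - \<psi> (- s))\<bar> \<le> \<bar>\<psi> s - (pi - \<psi> (- s))\<bar>" by (rule sin_lip)
      moreover have "\<bar>Gf \<alpha> (x s) (z s) (\<psi> s) - Gf \<alpha> (x (- s)) (- z (- s)) (pi - \<psi> (- s))\<bar> \<le> C * S"
        unfolding C_def S_def
        by (rule G_lip) (use d0 bx[OF s1(1)] bx[OF s1(2)] in auto)
      moreover have "\<bar>\<psi> s - (pi - \<psi> (- s))\<bar> \<le> S" unfolding S_def by simp
      ultimately show ?thesis unfolding S_def[symmetric] by (simp add: algebra_simps)
    qed
  qed
  show "x (- s) = x s \<and> z (- s) = - z s"
  proof (cases "s \<ge> 0")
    case True
    then show ?thesis using main[of s] unfolding T_def by auto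
  next
    case False
    then show ?thesis using main[of "-s"] unfolding T_def by auto
  qed
qed

end
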